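(* Let $\Phi(x,y)=(P(x,y),Q(x,y))$ be a divergence-free jacobian map of degree $n$. Then there exist $\alpha,\beta\in\mathbb{R}$ with $\alpha^2+\beta^2\neq 0$ and $\varepsilon_2,\dots,\varepsilon_n\in\mathbb{R}$ such that $$P(x,y)=x+\sum_{i=2}^n\varepsilon_i\,\alpha(\beta x-\alpha y)^i,\qquad Q(x,y)=y+\sum_{i=2}^n\varepsilon_i\,\beta(\beta x-\alpha y)^i.$$
   Context: A jacobian map is a real polynomial map $\Phi:\mathbb{R}^2\to\mathbb{R}^2$ whose jacobian determinant $\det J_\Phi$ is a non-zero constant. A divergence-free jacobian map is a jacobian map of the form $P(x,y)=x+\sum_{i=2}^n p_i(x,y)$, $Q(x,y)=y+\sum_{i=2}^n q_i(x,y)$, where $p_i,q_i$ are real homogeneous polynomials of degree $i$, such that $\frac{\partial}{\partial x}\sum_{i=2}^n p_i+\frac{\partial}{\partial y}\sum_{i=2}^n q_i=0$ identically. Its degree is the maximal total degree of $P,Q$. *)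

theory Defs
  imports "HOL-Analysis.Analysis"
begin

definition hpoly :: "(nat \<Rightarrow> real) \<Rightarrow> nat \<Rightarrow> real \<Rightarrow> real \<Rightarrow> real" where
  "hpoly c i x y = (\<Sum>j=0..i. c j * x ^ j * y ^ (i - j))"

definition nlpart :: "(nat \<Rightarrow> nat \<Rightarrow> real) \<Rightarrow> nat \<Rightarrow> real \<Rightarrow> real \<Rightarrow> real" where
  "nlpart a n x y = (\<Sum>i=2..n. hpoly (a i) i x y)"

definition jac_det :: "(real \<Rightarrow> real \<Rightarrow> real) \<Rightarrow> (real \<Rightarrow> real \<Rightarrow> real) \<Rightarrow> real \<Rightarrow> real \<Rightarrow> real" where
  "jac_det P Q x y =
     deriv (\<lambda>t. P t y) x * deriv (\<lambda>t. Q x t) y - deriv (\<lambda>t. P x t) y * deriv (\<lambda>t. Q t y) x"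

end

theory Submission
  imports Defs "HOL-Computational_Algebra.Polynomial"
begin


definition evb :: "real poly poly \<Rightarrow> real \<Rightarrow> real \<Rightarrow> real" where
  "evb F x y = poly (poly F [:y:]) x"

definition Lp :: "real poly poly \<Rightarrow> real \<Rightarrow> real \<Rightarrow> real \<Rightarrow> real \<Rightarrow> real poly" where
  "Lp F x0 y0 d1 d2 = poly (map_poly (\<lambda>c. pcompose c [:x0,d1:]) F) [:y0,d2:]"

definition dX :: "real poly poly \<Rightarrow> real poly poly" where
  "dX F = map_poly pderiv F"

lemma evb_pCons: "evb (pCons a F) x y = poly a x + y * evb F x y"
  by (simp add: evb_def)

lemma evb_add[simp]: "evb (F + G) x y = evb F x y + evb G x y"
  by (simp add: evb_def)
lemma evb_diff[simp]: "evb (F - G) x y = evb F x y - evb G x y"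
  by (simp add: evb_def)
lemma evb_minus[simp]: "evb (- F) x y = - evb F x y"
  by (simp add: evb_def)
lemma evb_mult[simp]: "evb (F * G) x y = evb F x y * evb G x y"
  by (simp add: evb_def)
lemma evb_power[simp]: "evb (F ^ k) x y = evb F x y ^ k"
  by (simp add: evb_def poly_power)
lemma evb_sum[simp]: "evb (\<Sum>i\<in>A. F i) x y = (\<Sum>i\<in>A. evb (F i) x y)"
  by (simp add: evb_def poly_sum)
lemma evb_const[simp]: "evb [:[:c:]:] x y = c"
  by (simp add: evb_def)
lemma evb_0[simp]: "evb 0 x y = 0"
  by (simp add: evb_def)
lemma evb_1[simp]: "evb 1 x y = 1"
  by (simp add: evb_def)
lemma evb_X[simp]: "evb [:[:0,1:]:] x y = x"
  by (simp add: evb_def)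
lemma evb_Y[simp]: "evb [:0,1:] x y = y"
  by (simp add: evb_def)

lemma Lp_pCons: "Lp (pCons a F) x0 y0 d1 d2 = pcompose a [:x0,d1:] + [:y0,d2:] * Lp F x0 y0 d1 d2"
  by (simp add: Lp_def map_poly_pCons)

lemma Lp_eval: "poly (Lp F x0 y0 d1 d2) s = evb F (x0 + s*d1) (y0 + s*d2)"
proof (induction F)
  case 0
  then show ?case by (simp add: Lp_def)
next
  case (pCons a F)
  then show ?case by (simp add: Lp_pCons evb_pCons poly_pcompose algebra_simps)
qed

lemma coeff_poly_const: "coeff (poly F [:y:]) k = poly (map_poly (\<lambda>c. coeff c k) F) y"
proof (induction F)
  case 0
  then show ?case by simp
next
  case (pCons a F)
  then show ?case by (simp add: map_poly_pCons)
qed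

lemma evb_zero_imp: assumes "\<And>x y. evb F x y = 0" shows "F = 0"
proof -
  have 1: "poly F [:y:] = 0" for y
    using assms by (simp add: evb_def poly_all_0_iff_0[symmetric])
  have 2: "map_poly (\<lambda>c. coeff c k) F = 0" for k
    using 1 by (metis coeff_0 coeff_poly_const poly_all_0_iff_0)
  show ?thesis
  proof (rule poly_eqI)
    fix i show "coeff F i = coeff 0 i"
    proof (simp, rule poly_eqI)
      fix k
      have "coeff (map_poly (\<lambda>c. coeff c k) F) i = 0" using 2 by simp
      then show "coeff (coeff F i) k = coeff 0 k" by (simp add: coeff_map_poly)
    qed
  qed
qed

lemma evb_eqI: assumes "\<And>x y. evb F x y = evb G x y" shows "F = G"
proof -
  have "F - G = 0" by (rule evb_zero_imp) (simp add: assms)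
  then show ?thesis by simp
qed

lemma poly_ext: "(\<And>s. poly p s = poly (q::real poly) s) \<Longrightarrow> p = q"
  using poly_eq_poly_eq_iff by blast

lemma Lp_add: "Lp (F + G) x0 y0 d1 d2 = Lp F x0 y0 d1 d2 + Lp G x0 y0 d1 d2"
  by (rule poly_ext) (simp add: Lp_eval)

lemma dX_pCons: "dX (pCons a F) = pCons (pderiv a) (dX F)"
  by (simp add: dX_def map_poly_pCons)

lemma dX_0[simp]: "dX 0 = 0" by (simp add: dX_def)

lemma pderiv_lin: "pderiv [:a, d:] = [:d:]"
  by (simp add: pderiv_pCons)

lemma Lp_0[simp]: "Lp 0 x0 y0 d1 d2 = 0" by (simp add: Lp_def)

lemma Lp_deriv: "pderiv (Lp F x0 y0 d1 d2) = [:d1:] * Lp (dX F) x0 y0 d1 d2 + [:d2:] * Lp (pderiv F) x0 y0 d1 d2"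
proof (induction F)
  case 0
  then show ?case by simp
next
  case (pCons a F)
  have e1: "Lp (pCons 0 H) x0 y0 d1 d2 = [:y0,d2:] * Lp H x0 y0 d1 d2" for H
    by (simp add: Lp_pCons)
  define r where "r = [:y0,d2:]"
  define q where "q = [:x0,d1:]"
  have dr: "pderiv r = [:d2:]" "pderiv q = [:d1:]" by (simp_all add: r_def q_def pderiv_lin)
  have L: "Lp (pCons b H) x0 y0 d1 d2 = pcompose b q + r * Lp H x0 y0 d1 d2" for b H
    by (simp add: Lp_pCons r_def q_def)
  have IH: "pderiv (Lp F x0 y0 d1 d2) = [:d1:] * Lp (dX F) x0 y0 d1 d2 + [:d2:] * Lp (pderiv F) x0 y0 d1 d2"
    by (rule pCons.IH)
  have "pderiv (Lp (pCons a F) x0 y0 d1 d2) = pcompose (pderiv a) q * [:d1:] + (r * pderiv (Lp F x0 y0 d1 d2) + Lp F x0 y0 d1 d2 * [:d2:])"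
    by (simp only: L pderiv_add pderiv_mult pderiv_pcompose dr)
  also have "\<dots> = [:d1:] * (pcompose (pderiv a) q + r * Lp (dX F) x0 y0 d1 d2) + [:d2:] * (Lp F x0 y0 d1 d2 + (pcompose 0 q + r * Lp (pderiv F) x0 y0 d1 d2))"
    by (simp only: IH) (simp add: algebra_simps)
  also have "\<dots> = [:d1:] * Lp (dX (pCons a F)) x0 y0 d1 d2 + [:d2:] * Lp (pderiv (pCons a F)) x0 y0 d1 d2"
    by (simp only: dX_pCons pderiv_pCons L Lp_add)
  finally show ?case .
qed

lemma DX: "DERIV (\<lambda>t. evb F t y) x :> evb (dX F) x y"
proof -
  have "(\<lambda>t. evb F t y) = (\<lambda>t. poly (Lp F 0 y 1 0) t)" by (simp add: Lp_eval)
  moreover have "poly (pderiv (Lp F 0 y 1 0)) x = evb (dX F) x y"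
    by (simp add: Lp_deriv Lp_eval)
  ultimately show ?thesis by (metis poly_DERIV)
qed

lemma DY: "DERIV (\<lambda>t. evb F x t) y :> evb (pderiv F) x y"
proof -
  have "(\<lambda>t. evb F x t) = (\<lambda>t. poly (Lp F x 0 0 1) t)" by (simp add: Lp_eval)
  moreover have "poly (pderiv (Lp F x 0 0 1)) y = evb (pderiv F) x y"
    by (simp add: Lp_deriv Lp_eval)
  ultimately show ?thesis by (metis poly_DERIV)
qed

lemma derivX: "deriv (\<lambda>t. evb F t y) x = evb (dX F) x y"
  using DX DERIV_imp_deriv by blast
lemma derivY: "deriv (\<lambda>t. evb F x t) y = evb (pderiv F) x y"
  using DY DERIV_imp_deriv by blast

lemma dX_eqI: assumes "\<And>x y. DERIV (\<lambda>t. evb F t y) x :> evb G x y" shows "dX F = G"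
  by (rule evb_eqI) (meson DERIV_unique DX assms)

lemma dY_eqI: assumes "\<And>x y. DERIV (\<lambda>t. evb F x t) y :> evb G x y" shows "pderiv F = G"
  by (rule evb_eqI) (meson DERIV_unique DY assms)

lemma dX_add: "dX (F + G) = dX F + dX G"
  by (rule dX_eqI) (auto intro!: derivative_eq_intros DX)
lemma dX_diff: "dX (F - G) = dX F - dX G"
  by (rule dX_eqI) (auto intro!: derivative_eq_intros DX)
lemma dX_minus: "dX (- G) = - dX G"
  by (rule dX_eqI) (auto intro!: derivative_eq_intros DX)
lemma dX_mult: "dX (F * G) = dX F * G + F * dX G"
  by (rule dX_eqI) (auto intro!: derivative_eq_intros DX)
lemma dX_const: "dX [:[:c:]:] = 0"
  by (rule dX_eqI) (auto intro!: derivative_eq_intros)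

lemma dXY: "dX (pderiv F) = pderiv (dX F)"
  by (rule poly_eqI) (simp add: dX_def coeff_map_poly coeff_pderiv pderiv_mult pderiv_add)

lemma mult_lemma:
  fixes N D R :: "real poly"
  assumes eq: "N * pderiv D = D * R" and N0: "poly N 0 \<noteq> 0" and D0: "poly D 0 = 0"
  shows "D = 0"
proof (rule ccontr)
  assume Dn: "D \<noteq> 0"
  have dD: "pderiv D \<noteq> 0"
  proof
    assume "pderiv D = 0"
    then have "degree D = 0" by (simp add: pderiv_eq_0_iff)
    then have "D = [:coeff D 0:]" by (metis degree_0_id)
    then have "D = [:poly D 0:]" by (simp add: poly_0_coeff_0)
    with D0 Dn show False by simp
  qed
  have Nn: "N \<noteq> 0" using N0 by auto
  have o1: "order 0 D = Suc (order 0 (pderiv D))" using order_pderiv[OF Dn D0] .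
  have ne: "N * pderiv D \<noteq> 0" using Nn dD by simp
  have "order 0 (N * pderiv D) = order 0 N + order 0 (pderiv D)" using order_mult[OF ne] .
  also have "order 0 N = 0" using N0 by (rule order_0I)
  finally have a: "order 0 (N * pderiv D) = order 0 (pderiv D)" by simp
  have ne2: "D * R \<noteq> 0" using ne eq by simp
  have "order 0 (D * R) = order 0 D + order 0 R" using order_mult[OF ne2] .
  with a eq o1 show False by simp
qed

lemma Lp_mult[simp]: "Lp (F * G) x0 y0 d1 d2 = Lp F x0 y0 d1 d2 * Lp G x0 y0 d1 d2"
  by (rule poly_ext) (simp add: Lp_eval)
lemma Lp_diff[simp]: "Lp (F - G) x0 y0 d1 d2 = Lp F x0 y0 d1 d2 - Lp G x0 y0 d1 d2"
  by (rule poly_ext) (simp add: Lp_eval)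
lemma Lp_minus[simp]: "Lp (- G) x0 y0 d1 d2 = - Lp G x0 y0 d1 d2"
  by (rule poly_ext) (simp add: Lp_eval)
lemma Lp_const[simp]: "Lp [:[:c:]:] x0 y0 d1 d2 = [:c:]"
  by (rule poly_ext) (simp add: Lp_eval)
declare Lp_add[simp]
lemma evb_smult[simp]: "evb (smult a G) x y = poly a x * evb G x y"
  by (simp add: evb_def)
lemma Lp_smult[simp]: "Lp (smult [:c:] G) x0 y0 d1 d2 = smult c (Lp G x0 y0 d1 d2)"
  by (rule poly_ext) (simp add: Lp_eval)

lemma const_poly: "pderiv (p::real poly) = 0 \<Longrightarrow> poly p s = poly p 0"
proof -
  assume "pderiv p = 0"
  then have "degree p = 0" by (simp add: pderiv_eq_0_iff)
  then obtain c where "p = [:c:]" by (metis degree_0_id)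
  then show ?thesis by simp
qed

lemma line_const:
  assumes "dX F * [:[:d1:]:] + pderiv F * [:[:d2:]:] = 0"
  shows "evb F (x0 + s*d1) (y0 + s*d2) = evb F x0 y0"
proof -
  have "pderiv (Lp F x0 y0 d1 d2) = Lp (dX F * [:[:d1:]:] + pderiv F * [:[:d2:]:]) x0 y0 d1 d2"
    by (simp add: Lp_deriv mult.commute)
  also have "\<dots> = 0" using assms by simp
  finally have "poly (Lp F x0 y0 d1 d2) s = poly (Lp F x0 y0 d1 d2) 0" by (rule const_poly)
  then show ?thesis by (simp add: Lp_eval)
qed

lemma ring_id1:
  fixes g1 g2 h1 h2 l1 l2 k1 k2 :: "'a::comm_ring_1"
  shows "(g1*g1+g2*g2)^2 * (k1*(k1*h2+k2*l2)-k2*(k1*h1+k2*l1)) =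
     (k1*g1+k2*g2)^2 * (g1*(g1*h2+g2*l2)-g2*(g1*h1+g2*l1)) +
     (k1*g2-k2*g1) * ((k1*g2-k2*g1) * ((-g2)*(-h2*g2+l2*g1)-g1*(-h1*g2+l1*g1))
        - (k1*g1+k2*g2) * ((g1*(-h2*g2+l2*g1)-g2*(-h1*g2+l1*g1)) + ((-g2)*(h2*g1+l2*g2)-g1*(h1*g1+l1*g2))))"
  by (simp add: algebra_simps power2_eq_square)

lemma ring_id2:
  fixes g1 g2 A B k1 k2 :: "'a::comm_ring_1"
  shows "(g1*g1+g2*g2) * (k1*A + k2*B) = (k1*g1+k2*g2)*(A*g1+B*g2) - (k1*g2-k2*g1)*(B*g1 - A*g2)"
  by (simp add: algebra_simps power2_eq_square)

lemma claimA:
  fixes K1 K2 F :: "real poly poly"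
  assumes curv: "K1*(K1*dX K2 + K2*pderiv K2) - K2*(K1*dX K1 + K2*pderiv K1) = 0"
  and MK: "dX F * K1 + pderiv F * K2 = 0"
  and k: "(evb K1 x0 y0, evb K2 x0 y0) \<noteq> (0,0)"
  shows "evb F (x0 + s * evb K1 x0 y0) (y0 + s * evb K2 x0 y0) = evb F x0 y0"
proof -
  define k1 where "k1 = evb K1 x0 y0"
  define k2 where "k2 = evb K2 x0 y0"
  define c1 where "c1 = [:k1:]"
  define c2 where "c2 = [:k2:]"
  have pc: "pderiv c1 = 0" "pderiv c2 = 0" by (simp_all add: c1_def c2_def pderiv_pCons)
  define L where "L = (\<lambda>G. Lp G x0 y0 k1 k2)"
  have Lh: "L (G*H) = L G * L H" "L (G+H) = L G + L H" "L (G-H) = L G - L H" "L 0 = 0" for G H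
    by (simp_all add: L_def)
  have Ld: "pderiv (L G) = c1 * L (dX G) + c2 * L (pderiv G)" for G
    by (simp add: L_def Lp_deriv c1_def c2_def)
  define g1 where "g1 = L K1"
  define g2 where "g2 = L K2"
  define h1 where "h1 = L (dX K1)"
  define h2 where "h2 = L (dX K2)"
  define l1 where "l1 = L (pderiv K1)"
  define l2 where "l2 = L (pderiv K2)"
  have Z: "g1*(g1*h2 + g2*l2) - g2*(g1*h1 + g2*l1) = 0"
    using arg_cong[OF curv, of L] by (simp only: Lh g1_def g2_def h1_def h2_def l1_def l2_def)
  define D where "D = c1*g2 - c2*g1"
  have dD: "pderiv D = c1*(c1*h2+c2*l2) - c2*(c1*h1+c2*l1)"
    by (simp add: D_def pderiv_diff pderiv_mult pc g1_def g2_def h1_def h2_def l1_def l2_def Ld)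
  define N where "N = g1*g1+g2*g2"
  have g0: "poly g1 0 = k1" "poly g2 0 = k2"
    by (simp_all add: g1_def g2_def L_def Lp_eval k1_def k2_def)
  have N0: "poly N 0 \<noteq> 0" using k g0 unfolding N_def k1_def[symmetric] k2_def[symmetric]
    by auto
  have D0: "poly D 0 = 0" using g0 by (simp add: D_def c1_def c2_def)
  define R0 where "R0 = ((c1*g2-c2*g1) * ((-g2)*(-h2*g2+l2*g1)-g1*(-h1*g2+l1*g1))
        - (c1*g1+c2*g2) * ((g1*(-h2*g2+l2*g1)-g2*(-h1*g2+l1*g1)) + ((-g2)*(h2*g1+l2*g2)-g1*(h1*g1+l1*g2))))"
  have e: "N^2 * pderiv D = (c1*g1+c2*g2)^2 * (g1*(g1*h2 + g2*l2) - g2*(g1*h1 + g2*l1)) + D * R0"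
    unfolding dD unfolding N_def D_def R0_def by (rule ring_id1)
  then have "N^2 * pderiv D = D * R0" using Z by simp
  moreover have "poly (N^2) 0 \<noteq> 0" using N0 by (simp add: poly_power)
  ultimately have D: "D = 0" using D0 mult_lemma by blast
  define A where "A = L (dX F)"
  define B where "B = L (pderiv F)"
  have AB: "A*g1 + B*g2 = 0"
    using arg_cong[OF MK, of L] by (simp only: Lh A_def B_def g1_def g2_def)
  have "N * (c1*A + c2*B) = (c1*g1+c2*g2)*(A*g1+B*g2) - (c1*g2-c2*g1)*(B*g1 - A*g2)"
    unfolding N_def by (rule ring_id2)
  also have "\<dots> = 0" using AB D by (simp add: D_def)
  finally have "N * pderiv (L F) = 0" by (simp add: Ld A_def B_def)
  moreover have "N \<noteq> 0" using N0 by auto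
  ultimately have "pderiv (L F) = 0" by simp
  then have "poly (L F) s = poly (L F) 0" by (rule const_poly)
  then show ?thesis by (simp add: L_def Lp_eval k1_def k2_def)
qed


definition Xp :: "real poly poly" where "Xp = [:[:0,1:]:]"
definition Yp :: "real poly poly" where "Yp = [:0,1:]"
lemma evb_Xp[simp]: "evb Xp x y = x" by (simp add: Xp_def)
lemma evb_Yp[simp]: "evb Yp x y = y" by (simp add: Yp_def)

lemma dX_sum: "dX (\<Sum>i\<in>A. F i) = (\<Sum>i\<in>A. dX (F i))"
  by (induction A rule: infinite_finite_induct) (simp_all add: dX_add)
lemma pderiv_sum: "pderiv (\<Sum>i\<in>A. (F i :: real poly poly)) = (\<Sum>i\<in>A. pderiv (F i))"
  by (induction A rule: infinite_finite_induct) (simp_all add: pderiv_add)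

lemma dX_mono: "dX ([:[:c:]:] * Xp^j * Yp^k) = [:[:c * real j:]:] * Xp^(j-1) * Yp^k"
  by (rule dX_eqI) (auto intro!: derivative_eq_intros)
lemma dY_mono: "pderiv ([:[:c:]:] * Xp^j * Yp^k) = [:[:c * real k:]:] * Xp^j * Yp^(k-1)"
  by (rule dY_eqI) (auto intro!: derivative_eq_intros)

definition NL :: "(nat \<Rightarrow> nat \<Rightarrow> real) \<Rightarrow> nat \<Rightarrow> real poly poly" where
  "NL c n = (\<Sum>i\<in>{2..n}. \<Sum>j\<in>{0..i}. [:[:c i j:]:] * Xp^j * Yp^(i-j))"

lemma evb_NL: "evb (NL c n) x y = nlpart c n x y"
  by (simp add: NL_def nlpart_def hpoly_def mult.assoc)

lemma zpow: "i \<ge> 2 \<Longrightarrow> j \<le> i \<Longrightarrow> real j * (0::real)^(j-1) * 0^(i-j) = 0"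
proof -
  assume "i \<ge> 2" "j \<le> i"
  show ?thesis
  proof (cases "j = 0")
    case False
    have "(0::real)^(j-1) * 0^(i-j) = 0^((j-1)+(i-j))" by (simp only: power_add)
    also have "\<dots> = 0" using \<open>i \<ge> 2\<close> \<open>j \<le> i\<close> False by (intro power_0_left[THEN trans]) auto
    finally show ?thesis by simp
  qed simp
qed

lemma zpow2: "i \<ge> 2 \<Longrightarrow> j \<le> i \<Longrightarrow> (0::real)^j * (real (i-j) * 0^(i-j-1)) = 0"
proof -
  assume "i \<ge> 2" "j \<le> i"
  show ?thesis
  proof (cases "j = i")
    case False
    have "(0::real)^j * 0^(i-j-1) = 0^(j+(i-j-1))" by (simp only: power_add)
    also have "\<dots> = 0" using \<open>i \<ge> 2\<close> \<open>j \<le> i\<close> False by (intro power_0_left[THEN trans]) auto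
    finally show ?thesis by (metis mult.left_commute mult_zero_right)
  qed (use \<open>i \<ge> 2\<close> in simp)
qed

lemma NL_dX0: "evb (dX (NL c n)) 0 0 = 0"
  unfolding NL_def dX_sum dX_mono evb_sum
  by (intro sum.neutral ballI) (auto simp: zpow)

lemma NL_dY0: "evb (pderiv (NL c n)) 0 0 = 0"
  unfolding NL_def pderiv_sum dY_mono evb_sum
  by (intro sum.neutral ballI) (auto simp: zpow2 mult.assoc)

lemma NL_0: "evb (NL c n) 0 0 = 0"
  unfolding NL_def evb_sum
  by (intro sum.neutral ballI) (auto simp: power_0_left)

lemma hpoly_x0: "hpoly c i 0 t = c 0 * t^i"
proof -
  have "hpoly c i 0 t = (\<Sum>j\<in>{0..i}. if j = 0 then c 0 * t^i else 0)"
    unfolding hpoly_def by (rule sum.cong) auto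
  then show ?thesis by simp
qed

lemma hpoly_y0: "hpoly c i t 0 = c i * t^i"
proof -
  have "hpoly c i t 0 = (\<Sum>j\<in>{0..i}. if j = i then c i * t^i else 0)"
    unfolding hpoly_def by (rule sum.cong) auto
  then show ?thesis by simp
qed

lemma ring_curv1:
  fixes a b c ax ay by' cy :: "'a::comm_ring_1"
  assumes "cy = - ax"
  shows "b*(b*(-ax) + (-a)*(-ay)) - (-a)*(b*ay + (-a)*by') = b * (2*a*ay + by'*c + b*cy) - by' * (a*a + b*c)"
  using assms by (simp add: algebra_simps)

lemma ring_curv2:
  fixes a b c ax ay cx :: "'a::comm_ring_1"
  shows "(-a)*((-a)*(-cx) + (-c)*ax) - (-c)*((-a)*(-ax) + (-c)*(-ay)) = c * (2*a*ax + ay*c + b*cx) - cx * (a*a + b*c)"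
  by (simp add: algebra_simps)


lemma inter:
  fixes J1 J2 K1 K2 Fp Fq :: "real poly poly"
  assumes cJ: "J1*(J1*dX J2 + J2*pderiv J2) - J2*(J1*dX J1 + J2*pderiv J1) = 0"
  and cK: "K1*(K1*dX K2 + K2*pderiv K2) - K2*(K1*dX K1 + K2*pderiv K1) = 0"
  and MJp: "dX Fp * J1 + pderiv Fp * J2 = 0" and MJq: "dX Fq * J1 + pderiv Fq * J2 = 0"
  and MKp: "dX Fp * K1 + pderiv Fp * K2 = 0" and MKq: "dX Fq * K1 + pderiv Fq * K2 = 0"
  and J0: "(evb J1 x0 y0, evb J2 x0 y0) \<noteq> (0,0)"
  and triv: "dX Fp = 0 \<Longrightarrow> pderiv Fp = 0 \<Longrightarrow> dX Fq = 0 \<Longrightarrow> pderiv Fq = 0 \<Longrightarrow> K1 = 0 \<and> K2 = 0"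
  shows "[:[:evb J1 x0 y0:]:] * K2 - [:[:evb J2 x0 y0:]:] * K1 = 0"
proof (rule ccontr)
  define v1 where "v1 = evb J1 x0 y0"
  define v2 where "v2 = evb J2 x0 y0"
  define G where "G = [:[:v1:]:] * K2 - [:[:v2:]:] * K1"
  assume "[:[:evb J1 x0 y0:]:] * K2 - [:[:evb J2 x0 y0:]:] * K1 \<noteq> 0"
  then have Gne: "G \<noteq> 0" by (simp add: G_def v1_def v2_def)
  have key: "evb F x y = evb F x0 y0"
    if Gxy: "evb G x y \<noteq> 0" and MJF: "dX F * J1 + pderiv F * J2 = 0"
       and MKF: "dX F * K1 + pderiv F * K2 = 0" for F x y
  proof -
    define k1 where "k1 = evb K1 x y"
    define k2 where "k2 = evb K2 x y"
    define \<delta> where "\<delta> = v1*k2 - v2*k1"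
    have d: "\<delta> \<noteq> 0" using Gxy by (simp add: G_def \<delta>_def k1_def k2_def)
    have kne: "(evb K1 x y, evb K2 x y) \<noteq> (0,0)" using d by (auto simp: \<delta>_def k1_def k2_def)
    define s where "s = ((x - x0)*k2 - (y-y0)*k1)/\<delta>"
    define t where "t = -(v1*(y-y0) - v2*(x-x0))/\<delta>"
    have A: "evb F (x0 + s * v1) (y0 + s * v2) = evb F x0 y0"
      unfolding v1_def v2_def by (rule claimA[OF cJ MJF J0])
    have B: "evb F (x + t*k1) (y + t*k2) = evb F x y"
      unfolding k1_def k2_def by (rule claimA[OF cK MKF kne])
    have e1: "x0 + s * v1 = x + t*k1"
      using d by (simp add: s_def t_def \<delta>_def field_simps)
    have e2: "y0 + s * v2 = y + t*k2"
      using d by (simp add: s_def t_def \<delta>_def field_simps)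
    show ?thesis using A B e1 e2 by simp
  qed
  have cst: "(F - [:[:evb F x0 y0:]:]) * G = 0"
    if MJF: "dX F * J1 + pderiv F * J2 = 0" and MKF: "dX F * K1 + pderiv F * K2 = 0" for F
  proof (rule evb_zero_imp)
    fix x y
    show "evb ((F - [:[:evb F x0 y0:]:]) * G) x y = 0"
      using key[OF _ MJF MKF, of x y] by (cases "evb G x y = 0") auto
  qed
  have "Fp = [:[:evb Fp x0 y0:]:]" using cst[OF MJp MKp] Gne by simp
  moreover have "Fq = [:[:evb Fq x0 y0:]:]" using cst[OF MJq MKq] Gne by simp
  ultimately have "dX Fp = 0" "pderiv Fp = 0" "dX Fq = 0" "pderiv Fq = 0"
    by (metis dX_const, metis pderiv_pCons pderiv_0 add_0 pCons_0_0,
        metis dX_const, metis pderiv_pCons pderiv_0 add_0 pCons_0_0)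
  then have "K1 = 0" "K2 = 0" using triv by auto
  then show False using Gne by (simp add: G_def)
qed



theorem theorem1:
  fixes a b :: "nat \<Rightarrow> nat \<Rightarrow> real" and n :: nat
    and P Q :: "real \<Rightarrow> real \<Rightarrow> real"
  assumes P_def: "\<And>x y. P x y = x + nlpart a n x y"
    and Q_def: "\<And>x y. Q x y = y + nlpart b n x y"
    and jac: "\<exists>c. c \<noteq> 0 \<and> (\<forall>x y. jac_det P Q x y = c)"
    and divfree: "\<And>x y. deriv (\<lambda>t. nlpart a n t y) x + deriv (\<lambda>t. nlpart b n x t) y = 0"
    and n_ge: "n \<ge> 1"
    and degree: "n \<ge> 2 \<Longrightarrow> (\<exists>j\<le>n. a n j \<noteq> 0 \<or> b n j \<noteq> 0)"
  shows "\<exists>\<alpha> \<beta> (\<epsilon>::nat \<Rightarrow> real). \<alpha>\<^sup>2 + \<beta>\<^sup>2 \<noteq> 0 \<and>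
           (\<forall>x y. P x y = x + (\<Sum>i=2..n. \<epsilon> i * \<alpha> * (\<beta> * x - \<alpha> * y) ^ i) \<and>
                  Q x y = y + (\<Sum>i=2..n. \<epsilon> i * \<beta> * (\<beta> * x - \<alpha> * y) ^ i))"
proof -
  define Fp where "Fp = NL a n"
  define Fq where "Fq = NL b n"
  have np: "nlpart a n x y = evb Fp x y" for x y by (simp add: Fp_def evb_NL)
  have nq: "nlpart b n x y = evb Fq x y" for x y by (simp add: Fq_def evb_NL)
  have Pe: "(\<lambda>t. P t y) = (\<lambda>t. evb (Xp + Fp) t y)" "(\<lambda>t. P x t) = (\<lambda>t. evb (Xp + Fp) x t)" for x y
    by (simp_all add: P_def np)
  have Qe: "(\<lambda>t. Q t y) = (\<lambda>t. evb (Yp + Fq) t y)" "(\<lambda>t. Q x t) = (\<lambda>t. evb (Yp + Fq) x t)" for x y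
    by (simp_all add: Q_def nq)
  have dXXp: "dX Xp = 1" by (rule dX_eqI) (auto intro!: derivative_eq_intros)
  have dXYp: "dX Yp = 0" by (rule dX_eqI) (auto intro!: derivative_eq_intros)
  have dYXp: "pderiv Xp = 0" by (simp add: Xp_def pderiv_pCons)
  have dYYp: "pderiv Yp = 1" by (simp add: Yp_def pderiv_pCons)
  define pa where "pa = dX Fp"
  define pb where "pb = pderiv Fp"
  define qa where "qa = dX Fq"
  define qb where "qb = pderiv Fq"
  have div: "pa + qb = 0"
  proof (rule evb_zero_imp)
    fix x y
    have "(\<lambda>t. nlpart a n t y) = (\<lambda>t. evb Fp t y)" "(\<lambda>t. nlpart b n x t) = (\<lambda>t. evb Fq x t)"
      by (simp_all add: np nq)
    then show "evb (pa + qb) x y = 0" using divfree[where x=x and y=y]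
      by (simp add: derivX derivY pa_def qb_def)
  qed
  have jd: "jac_det P Q x y = (1 + evb pa x y) * (1 + evb qb x y) - evb pb x y * evb qa x y" for x y
    unfolding jac_det_def Pe Qe derivX derivY
    by (simp add: dX_add pderiv_add dXXp dXYp dYXp dYYp pa_def pb_def qa_def qb_def)
  obtain c where jc: "\<forall>x y. jac_det P Q x y = c" using jac by blast
  have o: "evb pa 0 0 = 0" "evb pb 0 0 = 0" "evb qa 0 0 = 0" "evb qb 0 0 = 0"
    by (simp_all add: pa_def pb_def qa_def qb_def Fp_def Fq_def NL_dX0 NL_dY0)
  have c1: "c = 1" using jc jd[of 0 0] o by simp
  have det: "pa*qb - pb*qa = 0"
  proof (rule evb_zero_imp)
    fix x y
    have "(1 + evb pa x y) * (1 + evb qb x y) - evb pb x y * evb qa x y = 1"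
      using jc jd c1 by simp
    moreover have "evb pa x y + evb qb x y = 0" using div by (metis evb_add evb_0)
    ultimately show "evb (pa*qb - pb*qa) x y = 0" by (simp add: algebra_simps)
  qed
  have qb: "qb = - pa" using div by (simp add: eq_neg_iff_add_eq_0 add.commute)
  define E where "E = pa*pa + pb*qa"
  have E0: "E = 0" using det by (simp add: E_def qb algebra_simps)
  have s1: "dX pb = pderiv pa" by (simp add: pa_def pb_def dXY)
  have s2: "pderiv qa = - dX pa"
    by (simp add: qa_def dXY[symmetric] qb[unfolded qb_def] dX_minus pa_def)
  have dEx: "dX E = 0" using E0 by simp
  have dEy: "pderiv E = 0" using E0 by simp
  have curv1: "pb*(pb*dX (-pa) + (-pa)*pderiv (-pa)) - (-pa)*(pb*dX pb + (-pa)*pderiv pb) = 0"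
  proof -
    have "pb*(pb*dX (-pa) + (-pa)*pderiv (-pa)) - (-pa)*(pb*dX pb + (-pa)*pderiv pb)
          = pb * pderiv E - pderiv pb * E"
      by (simp add: E_def pderiv_mult pderiv_add dX_minus pderiv_minus s1 s2 algebra_simps)
    then show ?thesis using E0 dEy by simp
  qed
  have curv2: "(-pa)*((-pa)*dX (-qa) + (-qa)*pderiv (-qa)) - (-qa)*((-pa)*dX (-pa) + (-qa)*pderiv (-pa)) = 0"
  proof -
    have "(-pa)*((-pa)*dX (-qa) + (-qa)*pderiv (-qa)) - (-qa)*((-pa)*dX (-pa) + (-qa)*pderiv (-pa))
          = qa * dX E - dX qa * E"
      by (simp add: E_def dX_mult dX_add dX_minus pderiv_minus s1 s2 algebra_simps)
    then show ?thesis using E0 dEx by simp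
  qed
  have M1p: "dX Fp * pb + pderiv Fp * (-pa) = 0" by (simp add: pa_def pb_def)
  have M1q: "dX Fq * pb + pderiv Fq * (-pa) = 0"
    using E0 by (simp add: E_def qa_def[symmetric] qb_def[symmetric] qb algebra_simps)
  have M2p: "dX Fp * (-pa) + pderiv Fp * (-qa) = 0"
    using E0 by (simp add: E_def pa_def[symmetric] pb_def[symmetric] algebra_simps)
  have M2q: "dX Fq * (-pa) + pderiv Fq * (-qa) = 0"
    by (simp add: qa_def[symmetric] qb_def[symmetric] qb algebra_simps)
  have triv1: "dX Fp = 0 \<Longrightarrow> pderiv Fp = 0 \<Longrightarrow> dX Fq = 0 \<Longrightarrow> pderiv Fq = 0 \<Longrightarrow> pb = 0 \<and> -pa = 0"
    by (simp add: pa_def pb_def)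
  have triv2: "dX Fp = 0 \<Longrightarrow> pderiv Fp = 0 \<Longrightarrow> dX Fq = 0 \<Longrightarrow> pderiv Fq = 0 \<Longrightarrow> -pa = 0 \<and> -qa = 0"
    by (simp add: pa_def qa_def)
  have fin: ?thesis if v: "(v1, v2) \<noteq> (0,0)"
      and G1: "[:[:v1:]:] * (-pa) - [:[:v2:]:] * pb = 0"
      and G2: "[:[:v1:]:] * (-qa) - [:[:v2:]:] * (-pa) = 0" for v1 v2
  proof -
    define C1 where "C1 = [:[:v1:]:]"
    define C2 where "C2 = [:[:v2:]:]"
    have G1': "C1 * (-pa) - C2 * pb = 0" using G1 unfolding C1_def C2_def .
    have G2': "C1 * (-qa) - C2 * (-pa) = 0" using G2 unfolding C1_def C2_def .
    have pC: "pderiv C1 = 0" "pderiv C2 = 0" by (simp_all add: C1_def C2_def pderiv_pCons)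
    have dC: "dX C1 = 0" "dX C2 = 0" by (simp_all add: C1_def C2_def dX_const)
    have "dX Fp * C1 + pderiv Fp * C2 = - (C1 * (-pa) - C2 * pb)"
      by (simp add: pa_def pb_def algebra_simps)
    then have Lp': "dX Fp * [:[:v1:]:] + pderiv Fp * [:[:v2:]:] = 0" using G1' by (simp add: C1_def C2_def)
    have "dX Fq * C1 + pderiv Fq * C2 = - (C1 * (-qa) - C2 * (-pa))"
      by (simp add: qa_def[symmetric] qb_def[symmetric] qb algebra_simps)
    then have Lq': "dX Fq * [:[:v1:]:] + pderiv Fq * [:[:v2:]:] = 0" using G2' by (simp add: C1_def C2_def)
    define U where "U = C1 * Fq - C2 * Fp"
    have "dX U = - (C1 * (-qa) - C2 * (-pa))"
      by (simp add: U_def dX_diff dX_mult dC qa_def pa_def algebra_simps)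
    then have dU1: "dX U = 0" using G2' by simp
    have "pderiv U = C1 * (-pa) - C2 * pb"
      by (simp add: U_def pderiv_diff pderiv_mult pC qb_def[symmetric] pb_def[symmetric] qb algebra_simps)
    then have dU2: "pderiv U = 0" using G1' by simp
    have rel: "v1 * nlpart b n x y = v2 * nlpart a n x y" for x y
    proof -
      have "evb U (0 + 1*x) (0 + 1*y) = evb U 0 0" by (rule line_const) (simp add: dU1 dU2)
      then show ?thesis
        by (simp add: U_def C1_def C2_def np nq Fp_def Fq_def NL_0)
    qed
    have alP: "nlpart a n (x + s * v1) (y + s * v2) = nlpart a n x y" for x y s
      unfolding np by (rule line_const[OF Lp'])
    have alQ: "nlpart b n (x + s * v1) (y + s * v2) = nlpart b n x y" for x y s
      unfolding nq by (rule line_const[OF Lq'])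
    have nl0: "nlpart c n 0 t = (\<Sum>i=2..n. c i 0 * t^i)" for c t
      by (simp add: nlpart_def hpoly_x0)
    have nl1: "nlpart c n t 0 = (\<Sum>i=2..n. c i i * t^i)" for c t
      by (simp add: nlpart_def hpoly_y0)
    show ?thesis
    proof (cases "v1 = 0")
      case False
      show ?thesis
      proof (intro exI conjI allI)
        show "v1\<^sup>2 + v2\<^sup>2 \<noteq> 0" using False by simp
        fix x y
        have pe: "nlpart a n x y = (\<Sum>i=2..n. (a i 0 * (-1/v1)^i / v1) * v1 * (v2 * x - v1 * y) ^ i)"
        proof -
          have "nlpart a n x y = nlpart a n (x + (-x/v1) * v1) (y + (-x/v1) * v2)" by (rule alP[symmetric])
          also have "\<dots> = nlpart a n 0 (y + (-x/v1) * v2)" using False by simp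
          also have "\<dots> = (\<Sum>i=2..n. a i 0 * (y + (-x/v1) * v2)^i)" by (rule nl0)
          also have "\<dots> = (\<Sum>i=2..n. (a i 0 * (-1/v1)^i / v1) * v1 * (v2 * x - v1 * y) ^ i)"
          proof (rule sum.cong)
            fix i
            have e: "y + (-x/v1) * v2 = (-1/v1) * (v2 * x - v1 * y)" using False by (simp add: field_simps)
            have "(y + (-x/v1) * v2)^i = (-1/v1)^i * (v2 * x - v1 * y)^i" unfolding e by (rule power_mult_distrib)
            then show "a i 0 * (y + (-x/v1) * v2)^i = (a i 0 * (-1/v1)^i / v1) * v1 * (v2 * x - v1 * y) ^ i"
              using False by simp
          qed simp
          finally show ?thesis .
        qed
        show "P x y = x + (\<Sum>i=2..n. (a i 0 * (-1/v1)^i / v1) * v1 * (v2 * x - v1 * y) ^ i)"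
          using pe by (simp add: P_def)
        have "nlpart b n x y = v2 / v1 * nlpart a n x y" using rel[of x y] False by (simp add: field_simps)
        also have "\<dots> = (\<Sum>i=2..n. (a i 0 * (-1/v1)^i / v1) * v2 * (v2 * x - v1 * y) ^ i)"
          unfolding pe sum_distrib_left using False by (intro sum.cong) auto
        finally show "Q x y = y + (\<Sum>i=2..n. (a i 0 * (-1/v1)^i / v1) * v2 * (v2 * x - v1 * y) ^ i)"
          by (simp add: Q_def)
      qed
    next
      case True
      then have v2: "v2 \<noteq> 0" using v by simp
      show ?thesis
      proof (intro exI conjI allI)
        show "v1\<^sup>2 + v2\<^sup>2 \<noteq> 0" using v2 by simp
        fix x y
        have "nlpart a n x y = 0" using rel[of x y] True v2 by simp
        then show "P x y = x + (\<Sum>i=2..n. (b i i / v2^(i+1)) * v1 * (v2 * x - v1 * y) ^ i)"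
          by (simp add: P_def True)
        have "nlpart b n x y = nlpart b n (x + (-y/v2) * v1) (y + (-y/v2) * v2)" by (rule alQ[symmetric])
        also have "\<dots> = nlpart b n x 0" using True v2 by simp
        also have "\<dots> = (\<Sum>i=2..n. b i i * x^i)" by (rule nl1)
        also have "\<dots> = (\<Sum>i=2..n. (b i i / v2^(i+1)) * v2 * (v2 * x - v1 * y) ^ i)"
          using True v2 by (intro sum.cong) (simp_all add: power_mult_distrib field_simps)
        finally show "Q x y = y + (\<Sum>i=2..n. (b i i / v2^(i+1)) * v2 * (v2 * x - v1 * y) ^ i)"
          by (simp add: Q_def)
      qed
    qed
  qed
  show ?thesis
  proof (cases "pa = 0 \<and> pb = 0 \<and> qa = 0")
    case True
    then have qb0: "qb = 0" using qb by simp
    have z: "nlpart a n x y = 0" "nlpart b n x y = 0" for x y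
    proof -
      have "evb Fp (0 + 1*x) (0 + 1*y) = evb Fp 0 0"
        by (rule line_const) (use True in \<open>simp add: pa_def[symmetric] pb_def[symmetric]\<close>)
      then show "nlpart a n x y = 0" by (simp add: np Fp_def NL_0)
      have "evb Fq (0 + 1*x) (0 + 1*y) = evb Fq 0 0"
        by (rule line_const) (use True qb0 in \<open>simp add: qa_def[symmetric] qb_def[symmetric]\<close>)
      then show "nlpart b n x y = 0" by (simp add: nq Fq_def NL_0)
    qed
    show ?thesis
      by (rule exI[of _ 1], rule exI[of _ 0], rule exI[of _ "\<lambda>_. 0"]) (simp add: P_def Q_def z)
  next
    case False
    obtain x0 y0 where xy: "evb pa x0 y0 \<noteq> 0 \<or> evb pb x0 y0 \<noteq> 0 \<or> evb qa x0 y0 \<noteq> 0"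
      using False evb_zero_imp by blast
    show ?thesis
    proof (cases "evb pa x0 y0 \<noteq> 0 \<or> evb pb x0 y0 \<noteq> 0")
      case True
      have J0: "(evb pb x0 y0, evb (-pa) x0 y0) \<noteq> (0,0)" using True by auto
      show ?thesis
        by (rule fin[OF J0 inter[OF curv1 curv1 M1p M1q M1p M1q J0 triv1]
                         inter[OF curv1 curv2 M1p M1q M2p M2q J0 triv2]])
    next
      case False
      have J0: "(evb (-pa) x0 y0, evb (-qa) x0 y0) \<noteq> (0,0)" using False xy by auto
      show ?thesis
        by (rule fin[OF J0 inter[OF curv2 curv1 M2p M2q M1p M1q J0 triv1]
                         inter[OF curv2 curv2 M2p M2q M2p M2q J0 triv2]])
    qed
  qed
qed

end
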